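(* Let $(\mathcal S,\mathcal Q,\Theta)$ be a Pufferfish scenario, $(\mathcal U,\omega)$ a continuous or finite slice profile, $\alpha>1$, $\epsilon>0$, and $f:\mathcal X\to\mathbb R^d$ a query. Let $\overline\Delta^2:=\int_{\mathbb S^{d-1}}(\Delta^u_\infty)^2\,d\omega(u)$. Then the mechanism $\mathcal M(X)=f(X)+N$, with $N\sim\mathcal N\!\left(0,\frac{\alpha\overline\Delta^2}{2\epsilon}I_d\right)$ independent of $X$, satisfies $(\alpha,\epsilon,\omega)$-Ave-SRPP in $(\mathcal S,\mathcal Q,\Theta)$.
   Context: Pufferfish scenario: secrets $\mathcal S$, pairs $\mathcal Q\subseteq\mathcal S\times\mathcal S$, priors $\Theta$; each $\theta$ is a joint law of secret $S$ and dataset $X$, with secret marginal $P^S_\theta$. $P^{f,s}_\theta$ is the law of $f(X)$ given $S=s$ under $\theta$; $\mathcal M^\theta_s$ the law of $\mathcal M(X)$ given $S=s$ under $\theta$. Slice profile $(\mathcal U,\omega)$: $\mathcal U\subseteq\mathbb S^{d-1}$ (unit sphere), $\omega$ a probability measure on $\mathbb S^{d-1}$ supported on $\mathcal U$. $\Psi^u(a)=\langle a,u\rangle$; $\Psi^u_\#$ pushforward. For measures on $\mathbb R$, $W_\infty(\nu,\mu)=\inf_{\pi\in\Pi(\nu,\mu)}\sup_{(x,y)\in\mathrm{supp}\,\pi}|x-y|$. Per-slice sensitivity: $\Delta^u_\infty:=\max_{(s_i,s_j)\in\mathcal Q,\theta\in\Theta}W_\infty(\Psi^u_\#P^{f,s_i}_\theta,\Psi^u_\#P^{f,s_j}_\theta)$.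 R\'enyi divergence $\mathtt D_\alpha(P\|Q)=\frac1{\alpha-1}\log\mathbb E_Q[(dP/dQ)^\alpha]$. $\mathtt{AveSD}^\omega_\alpha(P\|Q)=\int\mathtt D_\alpha(\Psi^u_\#P\|\Psi^u_\#Q)\,d\omega(u)$. $\mathcal M$ is $(\alpha,\epsilon,\omega)$-Ave-SRPP in $(\mathcal S,\mathcal Q,\Theta)$ if $\mathtt{AveSD}^\omega_\alpha(\mathcal M^\theta_{s_i}\|\mathcal M^\theta_{s_j})\le\epsilon$ for all $\theta\in\Theta$ and $(s_i,s_j)\in\mathcal Q$ with $P^S_\theta(s_i),P^S_\theta(s_j)>0$. *)

theory Defs
  imports "HOL-Probability.Probability"
begin

text \<open>Secrets of type 's, datasets of type 'x living in the measurable space Xsp.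
A prior theta is a probability measure on (secret, dataset) pairs; secrets carry the
discrete sigma-algebra.\<close>

definition pufferfish_scenario ::
  "'s set \<Rightarrow> ('s \<times> 's) set \<Rightarrow> ('s \<times> 'x) measure set \<Rightarrow> 'x measure \<Rightarrow> bool" where
  "pufferfish_scenario S Q \<Theta> Xsp \<longleftrightarrow>
     Q \<subseteq> S \<times> S \<and>
     (\<forall>\<theta>\<in>\<Theta>. prob_space \<theta> \<and> sets \<theta> = sets (count_space UNIV \<Otimes>\<^sub>M Xsp)
              \<and> emeasure \<theta> (S \<times> space Xsp) = 1)"

definition secret_event :: "('s \<times> 'x) measure \<Rightarrow> 's \<Rightarrow> ('s \<times> 'x) set" where
  "secret_event \<theta> s = {p \<in> space \<theta>. fst p = s}"

definition prior_secret :: "('s \<times> 'x) measure \<Rightarrow> 's \<Rightarrow> real" where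
  "prior_secret \<theta> s = measure \<theta> (secret_event \<theta> s)"

text \<open>Conditional law of (S,X) given S = s (meaningful when prior_secret theta s > 0).\<close>
definition cond_secret :: "('s \<times> 'x) measure \<Rightarrow> 's \<Rightarrow> ('s \<times> 'x) measure" where
  "cond_secret \<theta> s =
     density \<theta> (\<lambda>p. indicator (secret_event \<theta> s) p / emeasure \<theta> (secret_event \<theta> s))"

definition query_law :: "('s \<times> 'x) measure \<Rightarrow> ('x \<Rightarrow> 'a::euclidean_space) \<Rightarrow> 's \<Rightarrow> 'a measure" where
  "query_law \<theta> f s = distr (cond_secret \<theta> s) borel (\<lambda>p. f (snd p))"

text \<open>M^theta_s: law of the output of a randomized mechanism (Markov kernel K, whose
randomness is independent of the data) given S = s.\<close>
definition mech_law :: "('s \<times> 'x) measure \<Rightarrow> ('x \<Rightarrow> 'a measure) \<Rightarrow> 's \<Rightarrow> 'a measure" where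
  "mech_law \<theta> K s = cond_secret \<theta> s \<bind> (\<lambda>p. K (snd p))"

definition slice :: "'a::euclidean_space measure \<Rightarrow> 'a \<Rightarrow> real measure" where
  "slice P u = distr P borel (\<lambda>a. a \<bullet> u)"

definition slice_profile :: "'a::euclidean_space set \<Rightarrow> 'a measure \<Rightarrow> bool" where
  "slice_profile U \<omega> \<longleftrightarrow>
     U \<subseteq> sphere 0 1 \<and> U \<in> sets borel \<and> prob_space \<omega> \<and> sets \<omega> = sets borel \<and>
     emeasure \<omega> U = 1"

definition couplings :: "real measure \<Rightarrow> real measure \<Rightarrow> (real \<times> real) measure set" where
  "couplings \<nu> \<mu> = {\<pi>. prob_space \<pi> \<and> sets \<pi> = sets (borel :: (real \<times> real) measure) \<and>
                        distr \<pi> borel fst = \<nu> \<and> distr \<pi> borel snd = \<mu>}"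

definition msupport :: "'a::metric_space measure \<Rightarrow> 'a set" where
  "msupport \<pi> = {z. \<forall>e>0. emeasure \<pi> (ball z e) > 0}"

definition W_inf :: "real measure \<Rightarrow> real measure \<Rightarrow> ennreal" where
  "W_inf \<nu> \<mu> = (INF \<pi> \<in> couplings \<nu> \<mu>. SUP z \<in> msupport \<pi>. ennreal \<bar>fst z - snd z\<bar>)"

text \<open>Per-slice sensitivity Delta^u_infty (sup over pairs in Q and priors, restricted to
secrets of positive prior probability so that the conditional laws are defined).\<close>
definition slice_sens ::
  "('s \<times> 's) set \<Rightarrow> ('s \<times> 'x) measure set \<Rightarrow> ('x \<Rightarrow> 'a::euclidean_space) \<Rightarrow> 'a \<Rightarrow> ennreal" where
  "slice_sens Q \<Theta> f u =
     (SUP (\<theta>, si, sj) \<in> {(\<theta>, si, sj). \<theta> \<in> \<Theta> \<and> (si, sj) \<in> Q \<and>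
                                   prior_secret \<theta> si > 0 \<and> prior_secret \<theta> sj > 0}.
        W_inf (slice (query_law \<theta> f si) u) (slice (query_law \<theta> f sj) u))"

definition renyi_div :: "real \<Rightarrow> real measure \<Rightarrow> real measure \<Rightarrow> ennreal" where
  "renyi_div \<alpha> P Q =
     (if absolutely_continuous Q P then
        (let I = (\<integral>\<^sup>+ x. ennreal ((enn2real (RN_deriv Q P x)) powr \<alpha>) \<partial>Q)
         in if I = \<infinity> then \<infinity> else ennreal (ln (enn2real I) / (\<alpha> - 1)))
      else \<infinity>)"

definition AveSD :: "'a::euclidean_space measure \<Rightarrow> real \<Rightarrow> 'a measure \<Rightarrow> 'a measure \<Rightarrow> ennreal" where
  "AveSD \<omega> \<alpha> P Q = (\<integral>\<^sup>+ u. renyi_div \<alpha> (slice P u) (slice Q u) \<partial>\<omega>)"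

definition ave_srpp ::
  "real \<Rightarrow> real \<Rightarrow> 'a::euclidean_space measure \<Rightarrow> ('s \<times> 's) set \<Rightarrow> ('s \<times> 'x) measure set
     \<Rightarrow> ('x \<Rightarrow> 'a measure) \<Rightarrow> bool" where
  "ave_srpp \<alpha> \<epsilon> \<omega> Q \<Theta> K \<longleftrightarrow>
     (\<forall>\<theta>\<in>\<Theta>. \<forall>(si, sj)\<in>Q. prior_secret \<theta> si > 0 \<longrightarrow> prior_secret \<theta> sj > 0 \<longrightarrow>
        AveSD \<omega> \<alpha> (mech_law \<theta> K si) (mech_law \<theta> K sj) \<le> ennreal \<epsilon>)"

definition gaussian_noise :: "real \<Rightarrow> 'a::euclidean_space measure" where
  "gaussian_noise s2 =
     (if s2 = 0 then return borel 0
      else density lborel (\<lambda>x. ennreal ((2 * pi * s2) powr (- real DIM('a) / 2)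
                                          * exp (- (norm x)\<^sup>2 / (2 * s2)))))"

definition gaussian_mech :: "('x \<Rightarrow> 'a::euclidean_space) \<Rightarrow> real \<Rightarrow> 'x \<Rightarrow> 'a measure" where
  "gaussian_mech f s2 x = distr (gaussian_noise s2) borel (\<lambda>n. f x + n)"

end

theory Submission
  imports Defs
begin

lemma support_AE:
  fixes \<pi> :: "(real \<times> real) measure" and c :: real
  assumes sets: "sets \<pi> = sets borel" and c: "0 \<le> c"
    and sup: "(SUP z\<in>msupport \<pi>. ennreal \<bar>fst z - snd z\<bar>) \<le> ennreal c"
  shows "AE p in \<pi>. \<bar>fst p - snd p\<bar> \<le> c"
proof -
  define Ob where "Ob = {p::real\<times>real. c < \<bar>fst p - snd p\<bar>}"
  define F where "F = {B::(real\<times>real) set. open B \<and> emeasure \<pi> B = 0}"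
  have "Ob \<subseteq> \<Union>F"
  proof
    fix z assume z: "z \<in> Ob"
    have "z \<notin> msupport \<pi>"
    proof
      assume "z \<in> msupport \<pi>"
      then have "ennreal \<bar>fst z - snd z\<bar> \<le> ennreal c"
        using sup by (meson SUP_upper order_trans)
      then show False using z c by (auto simp: Ob_def)
    qed
    then obtain e where "e > 0" "\<not> emeasure \<pi> (ball z e) > 0"
      by (auto simp: msupport_def)
    then have "ball z e \<in> F" by (auto simp: F_def zero_less_iff_neq_zero)
    then show "z \<in> \<Union>F" using \<open>e > 0\<close> by (meson UnionI centre_in_ball)
  qed
  obtain F' where F': "F' \<subseteq> F" "countable F'" "\<Union>F' = \<Union>F"
    using Lindelof[of F] by (auto simp: F_def)
  have "(\<Union>B\<in>F'. B) \<in> null_sets \<pi>"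
  proof (rule null_sets_UN')
    show "countable F'" by fact
    fix B assume "B \<in> F'"
    then have "open B" "emeasure \<pi> B = 0" using F' by (auto simp: F_def)
    then show "B \<in> null_sets \<pi>" using sets by (auto simp: null_sets_def)
  qed
  moreover have "{p \<in> space \<pi>. \<not> \<bar>fst p - snd p\<bar> \<le> c} \<subseteq> (\<Union>B\<in>F'. B)"
    using \<open>Ob \<subseteq> \<Union>F\<close> F' by (auto simp: Ob_def)
  ultimately show ?thesis by (rule AE_I')
qed

lemma powr_bernoulli:
  fixes \<alpha> s :: real
  assumes a: "\<alpha> > 1" and s: "s \<ge> 0"
  shows "1 + \<alpha> * (s - 1) \<le> s powr \<alpha>"
proof -
  have der: "\<And>z. z > 0 \<Longrightarrow> ((\<lambda>x. x powr \<alpha>) has_real_derivative \<alpha> * z powr (\<alpha> - 1)) (at z)"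
    by (auto intro!: derivative_eq_intros simp: powr_diff)
  consider "s = 0" | "0 < s" "s < 1" | "s = 1" | "s > 1" using s by linarith
  then show ?thesis
  proof cases
    case 1 then show ?thesis using a by simp
  next
    case 2
    obtain z where z: "s < z" "z < 1" "1 powr \<alpha> - s powr \<alpha> = (1 - s) * (\<alpha> * z powr (\<alpha> - 1))"
      using MVT2[of s 1 "\<lambda>x. x powr \<alpha>" "\<lambda>z. \<alpha> * z powr (\<alpha> - 1)"] 2 der by force
    have "z powr (\<alpha> - 1) \<le> 1" using z 2 a by (intro powr_le1) auto
    then have "(1 - s) * (\<alpha> * z powr (\<alpha> - 1)) \<le> (1 - s) * \<alpha>"
      using 2 a by (intro mult_left_mono) auto
    then show ?thesis using z by (simp add: algebra_simps)
  next
    case 3 then show ?thesis by simp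
  next
    case 4
    obtain z where z: "1 < z" "z < s" "s powr \<alpha> - 1 powr \<alpha> = (s - 1) * (\<alpha> * z powr (\<alpha> - 1))"
      using MVT2[of 1 s "\<lambda>x. x powr \<alpha>" "\<lambda>z. \<alpha> * z powr (\<alpha> - 1)"] 4 der by force
    have "1 \<le> z powr (\<alpha> - 1)" using z a by (intro ge_one_powr_ge_zero) auto
    then have "(s - 1) * \<alpha> \<le> (s - 1) * (\<alpha> * z powr (\<alpha> - 1))"
      using 4 a by (intro mult_left_mono) auto
    then show ?thesis using z by (simp add: algebra_simps)
  qed
qed

lemma powr_tangent:
  fixes \<alpha> t r :: real
  assumes a: "\<alpha> > 1" and t: "t \<ge> 0" and r: "r > 0"
  shows "\<alpha> * r powr (\<alpha> - 1) * t - (\<alpha> - 1) * r powr \<alpha> \<le> t powr \<alpha>"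
proof -
  have "1 + \<alpha> * (t / r - 1) \<le> (t / r) powr \<alpha>" using powr_bernoulli[OF a, of "t/r"] t r by simp
  then have "r powr \<alpha> * (1 + \<alpha> * (t / r - 1)) \<le> r powr \<alpha> * (t / r) powr \<alpha>"
    by (intro mult_left_mono) auto
  also have "r powr \<alpha> * (t / r) powr \<alpha> = t powr \<alpha>" using t r by (simp add: powr_divide)
  also have "r powr \<alpha> * (1 + \<alpha> * (t / r - 1)) = \<alpha> * r powr (\<alpha> - 1) * t - (\<alpha> - 1) * r powr \<alpha>"
    using r by (simp add: powr_diff field_simps)
  finally show ?thesis .
qed

lemma integral_pos_prob:
  fixes f :: "'b \<Rightarrow> real"
  assumes M: "prob_space M" and fi: "integrable M f" and fp: "\<And>x. 0 < f x"
  shows "0 < (\<integral>x. f x \<partial>M)"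
proof -
  interpret prob_space M by fact
  have "0 \<le> (\<integral>x. f x \<partial>M)" using fp by (intro integral_nonneg_AE) (auto intro: less_imp_le)
  moreover have "(\<integral>x. f x \<partial>M) \<noteq> 0"
  proof
    assume "(\<integral>x. f x \<partial>M) = 0"
    then have "AE x in M. f x = 0" using integral_nonneg_eq_0_iff_AE[OF fi] fp
      by (auto intro: less_imp_le)
    then have "AE x in M. False" by (rule eventually_mono) (metis fp less_irrefl)
    then show False by simp
  qed
  ultimately show ?thesis by linarith
qed

lemma holder_pointwise:
  fixes \<alpha> :: real and A B :: "'b \<Rightarrow> real"
  assumes a: "\<alpha> > 1" and M: "prob_space M"
    and Am: "A \<in> borel_measurable M" and Bm: "B \<in> borel_measurable M"
    and Ai: "integrable M A" and Bi: "integrable M B"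
    and Ap: "\<And>x. 0 < A x" and Bp: "\<And>x. 0 < B x"
  shows "ennreal ((\<integral>x. A x \<partial>M) powr \<alpha> * (\<integral>x. B x \<partial>M) powr (1 - \<alpha>))
     \<le> (\<integral>\<^sup>+ x. ennreal (A x powr \<alpha> * B x powr (1 - \<alpha>)) \<partial>M)"
proof -
  interpret prob_space M by fact
  define a where "a = (\<integral>x. A x \<partial>M)"
  define b where "b = (\<integral>x. B x \<partial>M)"
  have apos: "a > 0" unfolding a_def using integral_pos_prob[OF M Ai Ap] .
  have bpos: "b > 0" unfolding b_def using integral_pos_prob[OF M Bi Bp] .
  define r where "r = a / b"
  have rpos: "r > 0" using apos bpos by (simp add: r_def)
  define L where "L = (\<lambda>x. \<alpha> * r powr (\<alpha> - 1) * A x - (\<alpha> - 1) * r powr \<alpha> * B x)"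
  define h where "h = (\<lambda>x. A x powr \<alpha> * B x powr (1 - \<alpha>))"
  have Lh: "L x \<le> h x" for x
  proof -
    have "\<alpha> * r powr (\<alpha> - 1) * (A x / B x) - (\<alpha> - 1) * r powr \<alpha> \<le> (A x / B x) powr \<alpha>"
      using powr_tangent[OF a _ rpos, of "A x / B x"] Ap[of x] Bp[of x] by simp
    then have "B x * (\<alpha> * r powr (\<alpha> - 1) * (A x / B x) - (\<alpha> - 1) * r powr \<alpha>) \<le> B x * (A x / B x) powr \<alpha>"
      using Bp[of x] by (intro mult_left_mono) auto
    also have "B x * (A x / B x) powr \<alpha> = h x"
      using Ap[of x] Bp[of x] by (simp add: h_def powr_divide powr_diff field_simps)
    also have "B x * (\<alpha> * r powr (\<alpha> - 1) * (A x / B x) - (\<alpha> - 1) * r powr \<alpha>) = L x"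
      using Bp[of x] by (simp add: L_def field_simps)
    finally show ?thesis .
  qed
  have intL: "(\<integral>x. L x \<partial>M) = a powr \<alpha> * b powr (1 - \<alpha>)"
  proof -
    have "(\<integral>x. L x \<partial>M) = \<alpha> * r powr (\<alpha> - 1) * a - (\<alpha> - 1) * r powr \<alpha> * b"
      unfolding L_def a_def b_def using Ai Bi by simp
    also have "\<dots> = r powr \<alpha> * b"
      using apos bpos by (simp add: r_def powr_diff field_simps)
    also have "\<dots> = a powr \<alpha> * b powr (1 - \<alpha>)"
      using apos bpos by (simp add: r_def powr_divide powr_diff field_simps)
    finally show ?thesis .
  qed
  have hm: "h \<in> borel_measurable M" unfolding h_def using Am Bm by measurable
  show ?thesis
  proof (cases "(\<integral>\<^sup>+ x. ennreal (h x) \<partial>M) = \<infinity>")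
    case True then show ?thesis by (simp add: h_def)
  next
    case False
    have hi: "integrable M h"
      using False hm by (intro integrableI_nonneg) (auto simp: h_def top.not_eq_extremum)
    have Li: "integrable M L" unfolding L_def using Ai Bi by auto
    have "a powr \<alpha> * b powr (1 - \<alpha>) \<le> (\<integral>x. h x \<partial>M)"
      unfolding intL[symmetric] using Li hi Lh by (intro integral_mono) auto
    then have "ennreal (a powr \<alpha> * b powr (1 - \<alpha>)) \<le> ennreal (\<integral>x. h x \<partial>M)"
      by (rule ennreal_leI)
    also have "ennreal (\<integral>x. h x \<partial>M) = (\<integral>\<^sup>+ x. ennreal (h x) \<partial>M)"
      using hi by (intro nn_integral_eq_integral[symmetric]) (auto simp: h_def)
    finally show ?thesis by (simp add: a_def b_def h_def)
  qed
qed

lemma normal_powr_prod: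
  fixes \<sigma> \<alpha> x y z :: real
  assumes s: "\<sigma> > 0"
  shows "normal_density x \<sigma> z powr \<alpha> * normal_density y \<sigma> z powr (1 - \<alpha>)
       = exp (\<alpha> * (\<alpha> - 1) * (x - y)\<^sup>2 / (2 * \<sigma>\<^sup>2)) * normal_density (\<alpha> * x + (1 - \<alpha>) * y) \<sigma> z"
proof -
  define k where "k = 1 / sqrt (2 * pi * \<sigma>\<^sup>2)"
  have kpos: "k > 0" using s by (simp add: k_def)
  have nd: "normal_density m \<sigma> z = exp (ln k - (z - m)\<^sup>2 / (2 * \<sigma>\<^sup>2))" for m
    using kpos by (simp add: normal_density_def k_def exp_diff exp_minus field_simps)
  have "normal_density x \<sigma> z powr \<alpha> * normal_density y \<sigma> z powr (1 - \<alpha>)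
     = exp (\<alpha> * (ln k - (z - x)\<^sup>2 / (2 * \<sigma>\<^sup>2)) + (1 - \<alpha>) * (ln k - (z - y)\<^sup>2 / (2 * \<sigma>\<^sup>2)))"
    unfolding nd by (simp add: powr_def exp_add[symmetric])
  also have "\<alpha> * (ln k - (z - x)\<^sup>2 / (2 * \<sigma>\<^sup>2)) + (1 - \<alpha>) * (ln k - (z - y)\<^sup>2 / (2 * \<sigma>\<^sup>2))
      = \<alpha> * (\<alpha> - 1) * (x - y)\<^sup>2 / (2 * \<sigma>\<^sup>2) + (ln k - (z - (\<alpha> * x + (1 - \<alpha>) * y))\<^sup>2 / (2 * \<sigma>\<^sup>2))"
    using s by (simp add: field_simps power2_eq_square)
  finally show ?thesis unfolding nd by (simp add: exp_add)
qed

lemma normal_renyi_integral: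
  fixes \<sigma> \<alpha> x y :: real
  assumes s: "\<sigma> > 0"
  shows "(\<integral>\<^sup>+ z. ennreal (normal_density x \<sigma> z powr \<alpha> * normal_density y \<sigma> z powr (1 - \<alpha>)) \<partial>lborel)
       = ennreal (exp (\<alpha> * (\<alpha> - 1) * (x - y)\<^sup>2 / (2 * \<sigma>\<^sup>2)))"
proof -
  define m where "m = \<alpha> * x + (1 - \<alpha>) * y"
  have "(\<integral>\<^sup>+ z. ennreal (normal_density x \<sigma> z powr \<alpha> * normal_density y \<sigma> z powr (1 - \<alpha>)) \<partial>lborel)
     = (\<integral>\<^sup>+ z. ennreal (exp (\<alpha> * (\<alpha> - 1) * (x - y)\<^sup>2 / (2 * \<sigma>\<^sup>2))) * ennreal (normal_density m \<sigma> z) \<partial>lborel)"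
    unfolding normal_powr_prod[OF s] m_def by (simp add: ennreal_mult)
  also have "\<dots> = ennreal (exp (\<alpha> * (\<alpha> - 1) * (x - y)\<^sup>2 / (2 * \<sigma>\<^sup>2))) * (\<integral>\<^sup>+ z. ennreal (normal_density m \<sigma> z) \<partial>lborel)"
    by (intro nn_integral_cmult) auto
  also have "(\<integral>\<^sup>+ z. ennreal (normal_density m \<sigma> z) \<partial>lborel) = 1"
    using s by (subst nn_integral_eq_integral) auto
  finally show ?thesis by simp
qed

definition gshift :: "real \<Rightarrow> real \<Rightarrow> real measure" where
  "gshift \<sigma> x = distr (density lborel (normal_density 0 \<sigma>)) borel (\<lambda>t. x + t)"

lemma gshift_measurable:
  assumes s: "\<sigma> > 0" and h: "h \<in> borel_measurable M"
  shows "(\<lambda>p. gshift \<sigma> (h p)) \<in> M \<rightarrow>\<^sub>M subprob_algebra borel"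
proof -
  have G: "density lborel (normal_density 0 \<sigma>) \<in> space (subprob_algebra lborel)"
    using prob_space_imp_subprob_space[OF prob_space_normal_density[where \<mu>=0 and \<sigma>=\<sigma>]] s
    by (auto simp: space_subprob_algebra)
  show ?thesis unfolding gshift_def
    by (rule measurable_distr2[where M=lborel]) (use h G in \<open>auto intro!: measurable_const\<close>)
qed

lemma emeasure_gshift:
  assumes A: "A \<in> sets borel"
  shows "emeasure (gshift \<sigma> x) A = (\<integral>\<^sup>+ z. ennreal (normal_density x \<sigma> z) * indicator A z \<partial>lborel)"
proof -
  have pre: "(\<lambda>t. x + t) -` A \<in> sets borel" by (rule measurable_sets_borel[OF _ A]) simp
  have "emeasure (gshift \<sigma> x) A = emeasure (density lborel (normal_density 0 \<sigma>)) ((\<lambda>t. x + t) -` A)"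
    unfolding gshift_def by (subst emeasure_distr) (use A pre in auto)
  also have "\<dots> = (\<integral>\<^sup>+ t. ennreal (normal_density 0 \<sigma> t) * indicator A (x + t) \<partial>lborel)"
    by (subst emeasure_density) (use pre in \<open>auto intro!: nn_integral_cong split: split_indicator\<close>)
  also have "\<dots> = (\<integral>\<^sup>+ z. ennreal (normal_density x \<sigma> z) * indicator A z \<partial>lborel)"
    using A by (subst nn_integral_real_affine[where c=1 and t=x, of "\<lambda>z. ennreal (normal_density x \<sigma> z) * indicator A z"])
      (auto simp: normal_density_def)
  finally show ?thesis .
qed

lemma mixture_density:
  assumes s: "\<sigma> > 0" and M: "prob_space M" and h: "h \<in> borel_measurable M"
  shows "M \<bind> (\<lambda>p. gshift \<sigma> (h p)) = density lborel (\<lambda>z. \<integral>\<^sup>+ p. ennreal (normal_density (h p) \<sigma> z) \<partial>M)"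
proof -
  interpret prob_space M by fact
  interpret pair_sigma_finite M lborel by standard
  have ne: "space M \<noteq> {}" by (rule not_empty)
  have hm: "(\<lambda>p. ennreal (normal_density (h p) \<sigma> z)) \<in> borel_measurable M" for z
    using h unfolding normal_density_def by measurable
  have sg: "sets (gshift \<sigma> x) = sets borel" for x by (simp add: gshift_def)
  show ?thesis
  proof (rule measure_eqI)
    show "sets (M \<bind> (\<lambda>p. gshift \<sigma> (h p))) = sets (density lborel (\<lambda>z. \<integral>\<^sup>+ p. ennreal (normal_density (h p) \<sigma> z) \<partial>M))"
      using ne by (subst sets_bind[where N=borel]) (auto simp: sg)
  next
    fix A assume "A \<in> sets (M \<bind> (\<lambda>p. gshift \<sigma> (h p)))"
    then have A: "A \<in> sets borel" using ne by (subst (asm) sets_bind[where N=borel]) (auto simp: sg)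
    have "emeasure (M \<bind> (\<lambda>p. gshift \<sigma> (h p))) A = (\<integral>\<^sup>+ p. emeasure (gshift \<sigma> (h p)) A \<partial>M)"
      using ne A gshift_measurable[OF s h] by (subst emeasure_bind) auto
    also have "\<dots> = (\<integral>\<^sup>+ p. \<integral>\<^sup>+ z. ennreal (normal_density (h p) \<sigma> z) * indicator A z \<partial>lborel \<partial>M)"
      using A by (simp add: emeasure_gshift)
    also have "\<dots> = (\<integral>\<^sup>+ z. \<integral>\<^sup>+ p. ennreal (normal_density (h p) \<sigma> z) * indicator A z \<partial>M \<partial>lborel)"
      using A h by (intro Fubini'[symmetric]) (auto simp: normal_density_def)
    also have "\<dots> = (\<integral>\<^sup>+ z. (\<integral>\<^sup>+ p. ennreal (normal_density (h p) \<sigma> z) \<partial>M) * indicator A z \<partial>lborel)"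
      using hm by (intro nn_integral_cong nn_integral_multc) auto
    also have "\<dots> = emeasure (density lborel (\<lambda>z. \<integral>\<^sup>+ p. ennreal (normal_density (h p) \<sigma> z) \<partial>M)) A"
      using A h by (subst emeasure_density) (auto simp: normal_density_def)
    finally show "emeasure (M \<bind> (\<lambda>p. gshift \<sigma> (h p))) A = emeasure (density lborel (\<lambda>z. \<integral>\<^sup>+ p. ennreal (normal_density (h p) \<sigma> z) \<partial>M)) A" .
  qed
qed

lemma normal_density_le: "\<sigma> > 0 \<Longrightarrow> normal_density m \<sigma> z \<le> 1 / sqrt (2 * pi * \<sigma>\<^sup>2)"
  unfolding normal_density_def by (intro mult_left_le) auto

lemma lborel_not_AE_False: "\<not> (AE z in (lborel::real measure). False)"
  using ae_filter_eq_bot_iff[of "lborel::real measure"] by (simp add: eventually_False)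

lemma renyi_mixture:
  fixes \<pi> :: "(real \<times> real) measure" and c \<sigma> \<alpha> :: real
  assumes s: "\<sigma> > 0" and a: "\<alpha> > 1" and P: "prob_space \<pi>" and sets: "sets \<pi> = sets borel"
    and c: "c \<ge> 0" and ae: "AE p in \<pi>. \<bar>fst p - snd p\<bar> \<le> c"
  shows "renyi_div \<alpha> (\<pi> \<bind> (\<lambda>p. gshift \<sigma> (fst p))) (\<pi> \<bind> (\<lambda>p. gshift \<sigma> (snd p)))
           \<le> ennreal (\<alpha> * c\<^sup>2 / (2 * \<sigma>\<^sup>2))"
proof -
  interpret prob_space \<pi> by fact
  have fstm[measurable]: "fst \<in> borel_measurable \<pi>" and sndm[measurable]: "snd \<in> borel_measurable \<pi>"
    by (auto simp: measurable_cong_sets[OF sets refl]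
        intro!: borel_measurable_continuous_onI continuous_intros)
  define a where "a = (\<lambda>z. \<integral>p. normal_density (fst p) \<sigma> z \<partial>\<pi>)"
  define b where "b = (\<lambda>z. \<integral>p. normal_density (snd p) \<sigma> z \<partial>\<pi>)"
  have ndm: "(\<lambda>p. normal_density (h p) \<sigma> z) \<in> borel_measurable \<pi>" if [measurable]: "h \<in> borel_measurable \<pi>" for h z
    unfolding normal_density_def by measurable
  have ndi: "integrable \<pi> (\<lambda>p. normal_density (h p) \<sigma> z)" if "h \<in> borel_measurable \<pi>" for h z
    using ndm[OF that] normal_density_le[OF s]
    by (intro integrable_const_bound[where B="1 / sqrt (2 * pi * \<sigma>\<^sup>2)"]) auto
  have apos: "a z > 0" for z unfolding a_def
    by (rule integral_pos_prob[OF P ndi[OF fstm]]) (rule normal_density_pos[OF s])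
  have bpos: "b z > 0" for z unfolding b_def
    by (rule integral_pos_prob[OF P ndi[OF sndm]]) (rule normal_density_pos[OF s])
  have jm: "(\<lambda>(z, p). normal_density (h p) \<sigma> z) \<in> borel_measurable (borel \<Otimes>\<^sub>M \<pi>)"
    if [measurable]: "h \<in> borel_measurable \<pi>" for h
    unfolding normal_density_def by measurable
  have am: "a \<in> borel_measurable borel" unfolding a_def
    by (rule borel_measurable_lebesgue_integral) (rule jm[OF fstm])
  have bm: "b \<in> borel_measurable borel" unfolding b_def
    by (rule borel_measurable_lebesgue_integral) (rule jm[OF sndm])
  have eqA: "\<pi> \<bind> (\<lambda>p. gshift \<sigma> (fst p)) = density lborel (\<lambda>z. ennreal (a z))"
    unfolding mixture_density[OF s P fstm] a_def
    by (intro arg_cong[where f="density lborel"] ext) (auto intro!: nn_integral_eq_integral ndi[OF fstm])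
  have eqB: "\<pi> \<bind> (\<lambda>p. gshift \<sigma> (snd p)) = density lborel (\<lambda>z. ennreal (b z))"
    unfolding mixture_density[OF s P sndm] b_def
    by (intro arg_cong[where f="density lborel"] ext) (auto intro!: nn_integral_eq_integral ndi[OF sndm])
  define E where "E = exp (\<alpha> * (\<alpha> - 1) * c\<^sup>2 / (2 * \<sigma>\<^sup>2))"
  let ?P = "density lborel (\<lambda>z. ennreal (a z))"
  let ?Q = "density lborel (\<lambda>z. ennreal (b z))"
  have eam: "(\<lambda>z. ennreal (a z)) \<in> borel_measurable lborel" using am by simp
  have ebm: "(\<lambda>z. ennreal (b z)) \<in> borel_measurable lborel" using bm by simp
  have sfQ: "sigma_finite_measure ?Q"
    using ebm by (subst sigma_finite_measure.sigma_finite_iff_density_finite[OF sigma_finite_lborel]) auto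
  have ac: "absolutely_continuous ?Q ?P"
    unfolding absolutely_continuous_def
  proof
    fix A assume "A \<in> null_sets ?Q"
    then have A: "A \<in> sets lborel" "AE z in lborel. z \<in> A \<longrightarrow> ennreal (b z) = 0"
      using null_sets_density_iff[OF ebm] by auto
    then have "AE z in lborel. z \<in> A \<longrightarrow> ennreal (a z) = 0"
      by (rule_tac eventually_mono[OF A(2)]) (use bpos in \<open>auto simp: less_le\<close>)
    then show "A \<in> null_sets ?P"
      using null_sets_density_iff[OF eam] A(1) by auto
  qed
  have dens: "density ?Q (\<lambda>z. ennreal (a z / b z)) = ?P"
  proof -
    have "density ?Q (\<lambda>z. ennreal (a z / b z)) = density lborel (\<lambda>z. ennreal (b z) * ennreal (a z / b z))"
      using am bm by (intro density_density_eq) auto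
    also have "(\<lambda>z. ennreal (b z) * ennreal (a z / b z)) = (\<lambda>z. ennreal (a z))"
    proof
      fix z show "ennreal (b z) * ennreal (a z / b z) = ennreal (a z)"
        using apos[of z] bpos[of z] by (simp add: ennreal_mult''[symmetric])
    qed
    finally show ?thesis .
  qed
  have RN: "AE z in ?Q. ennreal (a z / b z) = RN_deriv ?Q ?P z"
    using am bm by (intro sigma_finite_measure.RN_deriv_unique[OF sfQ] dens) auto
  define I where "I = (\<integral>\<^sup>+ x. ennreal ((enn2real (RN_deriv ?Q ?P x)) powr \<alpha>) \<partial>?Q)"
  have I_eq: "I = (\<integral>\<^sup>+ z. ennreal (a z powr \<alpha> * b z powr (1 - \<alpha>)) \<partial>lborel)"
  proof -
    have "I = (\<integral>\<^sup>+ z. ennreal ((a z / b z) powr \<alpha>) \<partial>?Q)"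
      unfolding I_def
    proof (rule nn_integral_cong_AE, rule eventually_mono[OF RN])
      fix z assume h: "ennreal (a z / b z) = RN_deriv ?Q ?P z"
      have "a z / b z \<ge> 0" using apos[of z] bpos[of z] by simp
      then show "ennreal (enn2real (RN_deriv ?Q ?P z) powr \<alpha>) = ennreal ((a z / b z) powr \<alpha>)"
        by (simp flip: h)
    qed
    also have "\<dots> = (\<integral>\<^sup>+ z. ennreal (b z) * ennreal ((a z / b z) powr \<alpha>) \<partial>lborel)"
      using am bm by (intro nn_integral_density) auto
    also have "\<dots> = (\<integral>\<^sup>+ z. ennreal (a z powr \<alpha> * b z powr (1 - \<alpha>)) \<partial>lborel)"
    proof (intro nn_integral_cong)
      fix z
      have "b z * (a z / b z) powr \<alpha> = a z powr \<alpha> * b z powr (1 - \<alpha>)"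
        using apos[of z] bpos[of z] by (simp add: powr_divide powr_diff field_simps)
      then show "ennreal (b z) * ennreal ((a z / b z) powr \<alpha>) = ennreal (a z powr \<alpha> * b z powr (1 - \<alpha>))"
        using bpos[of z] by (simp add: ennreal_mult''[symmetric])
    qed
    finally show ?thesis .
  qed
  have Fm: "(\<lambda>(p, z). ennreal (normal_density (fst p) \<sigma> z powr \<alpha> * normal_density (snd p) \<sigma> z powr (1 - \<alpha>)))
      \<in> borel_measurable (\<pi> \<Otimes>\<^sub>M lborel)"
    unfolding normal_density_def by measurable
  have I_le: "I \<le> ennreal E"
  proof -
    interpret pair_sigma_finite \<pi> lborel by standard
    have "I \<le> (\<integral>\<^sup>+ z. \<integral>\<^sup>+ p. ennreal (normal_density (fst p) \<sigma> z powr \<alpha> * normal_density (snd p) \<sigma> z powr (1 - \<alpha>)) \<partial>\<pi> \<partial>lborel)"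
      unfolding I_eq a_def b_def
      by (intro nn_integral_mono holder_pointwise[OF a P] ndm ndi fstm sndm normal_density_pos s)
    also have "\<dots> = (\<integral>\<^sup>+ p. \<integral>\<^sup>+ z. ennreal (normal_density (fst p) \<sigma> z powr \<alpha> * normal_density (snd p) \<sigma> z powr (1 - \<alpha>)) \<partial>lborel \<partial>\<pi>)"
      using Fm by (intro Fubini') simp
    also have "\<dots> = (\<integral>\<^sup>+ p. ennreal (exp (\<alpha> * (\<alpha> - 1) * (fst p - snd p)\<^sup>2 / (2 * \<sigma>\<^sup>2))) \<partial>\<pi>)"
      by (simp add: normal_renyi_integral[OF s])
    also have "\<dots> \<le> (\<integral>\<^sup>+ p. ennreal E \<partial>\<pi>)"
    proof (rule nn_integral_mono_AE, rule eventually_mono[OF ae])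
      fix p :: "real \<times> real" assume h: "\<bar>fst p - snd p\<bar> \<le> c"
      have "(fst p - snd p)\<^sup>2 \<le> c\<^sup>2" using power_mono[OF h abs_ge_zero, of 2] by simp
      then have "\<alpha> * (\<alpha> - 1) * (fst p - snd p)\<^sup>2 \<le> \<alpha> * (\<alpha> - 1) * c\<^sup>2"
        using a by (intro mult_left_mono) auto
      then have "\<alpha> * (\<alpha> - 1) * (fst p - snd p)\<^sup>2 / (2 * \<sigma>\<^sup>2) \<le> \<alpha> * (\<alpha> - 1) * c\<^sup>2 / (2 * \<sigma>\<^sup>2)"
        using s by (intro divide_right_mono) auto
      then show "ennreal (exp (\<alpha> * (\<alpha> - 1) * (fst p - snd p)\<^sup>2 / (2 * \<sigma>\<^sup>2))) \<le> ennreal E"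
        unfolding E_def by (intro ennreal_leI) simp
    qed
    also have "\<dots> = ennreal E" by (simp add: emeasure_space_1)
    finally show ?thesis .
  qed
  have I_pos: "I > 0"
  proof (rule ccontr)
    assume "\<not> I > 0"
    then have "I = 0" by (simp add: not_gr_zero)
    moreover have "(\<lambda>z. ennreal (a z powr \<alpha> * b z powr (1 - \<alpha>))) \<in> borel_measurable lborel"
      using am bm by simp
    ultimately have "AE z in lborel. ennreal (a z powr \<alpha> * b z powr (1 - \<alpha>)) = 0"
      unfolding I_eq by (simp add: nn_integral_0_iff_AE)
    then have "AE z in (lborel::real measure). False"
    proof (rule eventually_mono)
      fix z assume "ennreal (a z powr \<alpha> * b z powr (1 - \<alpha>)) = 0"
      moreover have "a z powr \<alpha> * b z powr (1 - \<alpha>) > 0" using apos[of z] bpos[of z] by simp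
      ultimately show False using apos[of z] bpos[of z] by simp
    qed
    then show False using lborel_not_AE_False by simp
  qed
  have Ifin: "I \<noteq> \<infinity>" using I_le by (auto simp: top_unique)
  have Epos: "E > 0" by (simp add: E_def)
  have "ennreal (enn2real I) \<le> ennreal E" using I_le Ifin by (simp add: ennreal_enn2real less_top)
  then have r_le: "enn2real I \<le> E" using Epos by (simp add: ennreal_le_iff)
  have r_pos: "enn2real I > 0" using I_pos Ifin by (simp add: enn2real_positive_iff less_top)
  have "ln (enn2real I) \<le> ln E" using r_le r_pos Epos by (subst ln_le_cancel_iff) auto
  then have "ln (enn2real I) \<le> \<alpha> * (\<alpha> - 1) * c\<^sup>2 / (2 * \<sigma>\<^sup>2)" by (simp add: E_def)
  then have "ln (enn2real I) / (\<alpha> - 1) \<le> (\<alpha> * (\<alpha> - 1) * c\<^sup>2 / (2 * \<sigma>\<^sup>2)) / (\<alpha> - 1)"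
    using a by (intro divide_right_mono) auto
  also have "\<dots> = \<alpha> * c\<^sup>2 / (2 * \<sigma>\<^sup>2)" using a by simp
  finally have fin: "ln (enn2real I) / (\<alpha> - 1) \<le> \<alpha> * c\<^sup>2 / (2 * \<sigma>\<^sup>2)" .
  have "renyi_div \<alpha> ?P ?Q = ennreal (ln (enn2real I) / (\<alpha> - 1))"
    unfolding renyi_div_def I_def[symmetric] using ac Ifin by (simp add: Let_def)
  then show ?thesis unfolding eqA eqB using fin by (simp add: ennreal_leI)
qed

lemma gauss_prod_eq:
  fixes \<sigma> :: real and f :: "'a::euclidean_space \<Rightarrow> real"
  assumes s: "\<sigma> > 0"
  shows "(2 * pi * \<sigma>\<^sup>2) powr (- real DIM('a) / 2) * exp (- (norm (\<Sum>b\<in>Basis. f b *\<^sub>R b :: 'a))\<^sup>2 / (2 * \<sigma>\<^sup>2))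
       = (\<Prod>b\<in>(Basis::'a set). normal_density 0 \<sigma> (f b))"
proof -
  define k where "k = 1 / sqrt (2 * pi * \<sigma>\<^sup>2)"
  have pos: "2 * pi * \<sigma>\<^sup>2 > 0" using s by simp
  have nrm: "(norm (\<Sum>b\<in>Basis. f b *\<^sub>R b :: 'a))\<^sup>2 = (\<Sum>b\<in>(Basis::'a set). (f b)\<^sup>2)"
  proof -
    let ?x = "(\<Sum>b\<in>Basis. f b *\<^sub>R b :: 'a)"
    have "(norm ?x)\<^sup>2 = (\<Sum>b\<in>(Basis::'a set). (?x \<bullet> b) * (?x \<bullet> b))"
      by (simp only: power2_norm_eq_inner euclidean_inner[of ?x ?x])
    also have "\<dots> = (\<Sum>b\<in>(Basis::'a set). (f b)\<^sup>2)"
      by (intro sum.cong) (auto simp: power2_eq_square)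
    finally show ?thesis .
  qed
  have kp: "k ^ DIM('a) = (2 * pi * \<sigma>\<^sup>2) powr (- real DIM('a) / 2)"
  proof -
    have "k = (2 * pi * \<sigma>\<^sup>2) powr (- (1 / 2))"
      by (simp only: k_def powr_minus_divide powr_half_sqrt[OF less_imp_le[OF pos]])
    then have "k ^ DIM('a) = (2 * pi * \<sigma>\<^sup>2) powr (real DIM('a) * (- (1 / 2)))"
      using pos by (simp only: powr_power of_nat_def)
    then show ?thesis by simp
  qed
  have "(\<Prod>b\<in>(Basis::'a set). normal_density 0 \<sigma> (f b))
      = (\<Prod>b\<in>(Basis::'a set). k * exp (- (f b)\<^sup>2 / (2 * \<sigma>\<^sup>2)))"
    by (simp add: normal_density_def k_def)
  also have "\<dots> = k ^ DIM('a) * exp (\<Sum>b\<in>(Basis::'a set). - (f b)\<^sup>2 / (2 * \<sigma>\<^sup>2))"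
    by (simp add: prod.distrib exp_sum)
  also have "(\<Sum>b\<in>(Basis::'a set). - (f b)\<^sup>2 / (2 * \<sigma>\<^sup>2)) = - (norm (\<Sum>b\<in>Basis. f b *\<^sub>R b :: 'a))\<^sup>2 / (2 * \<sigma>\<^sup>2)"
    unfolding nrm by (simp add: sum_divide_distrib sum_negf)
  finally show ?thesis unfolding kp by simp
qed

lemma prod_indicator_PiE:
  fixes A :: "'i \<Rightarrow> 'b set"
  assumes "finite I" "x \<in> extensional I"
  shows "(indicator (Pi\<^sub>E I A) x :: ennreal) = (\<Prod>i\<in>I. indicator (A i) (x i))"
proof (cases "\<forall>i\<in>I. x i \<in> A i")
  case True then show ?thesis using assms by (auto simp: PiE_def indicator_def)
next
  case False
  then obtain i where "i \<in> I" "x i \<notin> A i" by auto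
  then have "(\<Prod>i\<in>I. (indicator (A i) (x i) :: ennreal)) = 0"
    using assms \<open>i \<in> I\<close> \<open>x i \<notin> A i\<close> by (intro prod_zero) (auto intro!: bexI[where x=i])
  moreover have "x \<notin> Pi\<^sub>E I A" using \<open>i \<in> I\<close> \<open>x i \<notin> A i\<close> by (auto simp: PiE_def)
  ultimately show ?thesis by simp
qed

lemma gaussian_noise_prod:
  fixes s2 :: real
  assumes s2: "s2 > 0"
  shows "(gaussian_noise s2 :: 'a::euclidean_space measure)
     = distr (\<Pi>\<^sub>M b\<in>(Basis::'a set). density lborel (normal_density 0 (sqrt s2))) borel (\<lambda>f. \<Sum>b\<in>Basis. f b *\<^sub>R b)"
proof -
  define \<sigma> where "\<sigma> = sqrt s2"
  have s: "\<sigma> > 0" and s2eq: "s2 = \<sigma>\<^sup>2" using s2 by (auto simp: \<sigma>_def)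
  define G where "G = density lborel (normal_density 0 \<sigma>)"
  define L where "L = (\<Pi>\<^sub>M b\<in>(Basis::'a set). (lborel::real measure))"
  define T where "T = (\<lambda>f. \<Sum>b\<in>Basis. f b *\<^sub>R b :: 'a)"
  define gd where "gd = (\<lambda>x::'a. ennreal ((2 * pi * s2) powr (- real DIM('a) / 2) * exp (- (norm x)\<^sup>2 / (2 * s2))))"
  have Tm[measurable]: "T \<in> L \<rightarrow>\<^sub>M borel" unfolding T_def L_def by measurable
  have gdm[measurable]: "gd \<in> borel_measurable borel" unfolding gd_def by measurable
  have gTm: "(\<lambda>f. gd (T f)) \<in> borel_measurable L" by measurable
  have "(gaussian_noise s2 :: 'a measure) = density lborel gd"
    using s2 by (simp add: gaussian_noise_def gd_def)
  also have "\<dots> = density (distr L borel T) gd"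
    unfolding L_def T_def by (simp flip: lborel_eq)
  also have "\<dots> = distr (density L (\<lambda>f. gd (T f))) borel T"
    by (rule density_distr) auto
  also have "density L (\<lambda>f. gd (T f)) = (\<Pi>\<^sub>M b\<in>(Basis::'a set). G)"
  proof (rule product_sigma_finite.PiM_eqI)
    show "product_sigma_finite (\<lambda>_::'a. G)"
      unfolding product_sigma_finite_def G_def
      using prob_space_normal_density[where \<mu>=0 and \<sigma>=\<sigma>] s
      by (auto intro: prob_space_imp_sigma_finite)
    show "finite (Basis::'a set)" by simp
    show "sets (density L (\<lambda>f. gd (T f))) = sets (\<Pi>\<^sub>M b\<in>(Basis::'a set). G)"
      unfolding L_def G_def by (simp cong: sets_PiM_cong)
    fix A assume A: "\<And>i. i \<in> (Basis::'a set) \<Longrightarrow> A i \<in> sets G"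
    have "emeasure (density L (\<lambda>f. gd (T f))) (Pi\<^sub>E Basis A)
        = (\<integral>\<^sup>+ f. gd (T f) * indicator (Pi\<^sub>E Basis A) f \<partial>L)"
      using A gTm[unfolded L_def] unfolding L_def G_def
      by (intro emeasure_density) (auto intro!: sets_PiM_I_finite)
    also have "\<dots> = (\<integral>\<^sup>+ f. (\<Prod>b\<in>(Basis::'a set). ennreal (normal_density 0 \<sigma> (f b)) * indicator (A b) (f b)) \<partial>L)"
    proof (rule nn_integral_cong)
      fix f assume f: "f \<in> space L"
      have "gd (T f) = (\<Prod>b\<in>(Basis::'a set). ennreal (normal_density 0 \<sigma> (f b)))"
        unfolding gd_def T_def s2eq using gauss_prod_eq[OF s, of f]
        by (simp add: prod_ennreal)
      moreover have "indicator (Pi\<^sub>E Basis A) f = (\<Prod>b\<in>(Basis::'a set). (indicator (A b) (f b) :: ennreal))"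
        using f by (intro prod_indicator_PiE) (auto simp: L_def space_PiM PiE_def)
      ultimately show "gd (T f) * indicator (Pi\<^sub>E Basis A) f = (\<Prod>b\<in>(Basis::'a set). ennreal (normal_density 0 \<sigma> (f b)) * indicator (A b) (f b))"
        by (simp add: prod.distrib)
    qed
    also have "\<dots> = (\<Prod>b\<in>(Basis::'a set). \<integral>\<^sup>+ x. ennreal (normal_density 0 \<sigma> x) * indicator (A b) x \<partial>lborel)"
      unfolding L_def
      by (rule product_sigma_finite.product_nn_integral_prod[where f="\<lambda>b x. ennreal (normal_density 0 \<sigma> x) * indicator (A b) x"])
        (use A in \<open>auto simp: product_sigma_finite_def G_def intro: sigma_finite_lborel\<close>)
    also have "\<dots> = (\<Prod>b\<in>(Basis::'a set). emeasure G (A b))"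
      using A unfolding G_def by (intro prod.cong refl emeasure_density[symmetric]) auto
    finally show "emeasure (density L (\<lambda>f. gd (T f))) (Pi\<^sub>E Basis A) = (\<Prod>b\<in>(Basis::'a set). emeasure G (A b))" .
  qed
  finally show ?thesis unfolding G_def \<sigma>_def T_def .
qed

lemma gaussian_noise_slice:
  fixes s2 :: real and u :: "'a::euclidean_space"
  assumes s2: "s2 > 0" and u: "norm u = 1"
  shows "slice (gaussian_noise s2 :: 'a measure) u = density lborel (normal_density 0 (sqrt s2))"
proof -
  define \<sigma> where "\<sigma> = sqrt s2"
  have s: "\<sigma> > 0" using s2 by (auto simp: \<sigma>_def)
  define G where "G = density lborel (normal_density 0 \<sigma>)"
  have PG: "prob_space G" unfolding G_def using prob_space_normal_density[where \<mu>=0 and \<sigma>=\<sigma>] s by auto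
  define PB where "PB = (\<Pi>\<^sub>M b\<in>(Basis::'a set). G)"
  interpret FP: finite_product_prob_space "\<lambda>_::'a. G" "Basis::'a set"
    by (intro finite_product_prob_space.intro finite_product_sigma_finite.intro product_prob_spaceI
        finite_product_sigma_finite_axioms.intro PG product_sigma_finite.intro)
       (auto intro: prob_space_imp_sigma_finite PG)
  interpret P: prob_space PB unfolding PB_def by (rule FP.prob_space_axioms)
  define I where "I = {b\<in>(Basis::'a set). b \<bullet> u \<noteq> 0}"
  have finI: "finite I" and IB: "I \<subseteq> Basis" by (auto simp: I_def)
  have Ine: "I \<noteq> {}"
  proof
    assume "I = {}"
    then have "\<forall>b\<in>Basis. u \<bullet> b = 0" by (auto simp: I_def inner_commute)
    then have "u = 0" by (simp add: euclidean_all_zero_iff)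
    then show False using u by simp
  qed
  define X where "X = (\<lambda>b (f::'a \<Rightarrow> real). 0 + (b \<bullet> u) * f b)"
  have sets_G: "sets G = sets borel" by (simp add: G_def)
  have comp: "distributed PB lborel (\<lambda>f. f b) (normal_density 0 \<sigma>)" if "b \<in> Basis" for b
  proof -
    have "distr PB lborel (\<lambda>f. f b) = distr PB G (\<lambda>f. f b)"
      by (rule distr_cong) (auto simp: sets_G)
    also have "\<dots> = G" unfolding PB_def using that by (rule FP.PiM_component)
    finally show ?thesis unfolding distributed_def G_def PB_def using that by auto
  qed
  have Xd: "distributed PB lborel (X b) (normal_density 0 (\<bar>b \<bullet> u\<bar> * \<sigma>))" if "b \<in> I" for b
    using P.normal_density_affine[OF comp[of b] s, of "b \<bullet> u" 0] that by (auto simp: I_def X_def)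
  have rvc: "(\<lambda>f. f b) \<in> measurable PB G" if "b \<in> I" for b
  proof -
    have "b \<in> Basis" using that IB by auto
    then have "(\<lambda>f::'a\<Rightarrow>real. f b) \<in> measurable (\<Pi>\<^sub>M b\<in>(Basis::'a set). G) G"
      by (rule measurable_component_singleton)
    then show ?thesis by (simp add: PB_def)
  qed
  have deq: "distr PB (\<Pi>\<^sub>M i\<in>I. G) (\<lambda>x. \<lambda>i\<in>I. x i) = (\<Pi>\<^sub>M i\<in>I. distr PB G (\<lambda>f. f i))"
  proof -
    have "distr PB (\<Pi>\<^sub>M i\<in>I. G) (\<lambda>x. \<lambda>i\<in>I. x i) = (\<Pi>\<^sub>M i\<in>I. G)"
      unfolding PB_def using FP.distr_PiM_restrict_finite[OF finI IB] by (simp add: restrict_def)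
    also have "\<dots> = (\<Pi>\<^sub>M i\<in>I. distr PB G (\<lambda>f. f i))"
      unfolding PB_def using IB by (intro PiM_cong refl) (auto simp: FP.PiM_component)
    finally show ?thesis .
  qed
  have ind0: "P.indep_vars (\<lambda>_. G) (\<lambda>b f. f b) I"
  proof -
    have "P.indep_vars (\<lambda>_. G) (\<lambda>b f. f b) I \<longleftrightarrow>
        distr PB (\<Pi>\<^sub>M i\<in>I. G) (\<lambda>x. \<lambda>i\<in>I. x i) = (\<Pi>\<^sub>M i\<in>I. distr PB G (\<lambda>f. f i))"
      by (rule P.indep_vars_iff_distr_eq_PiM'[OF Ine]) (rule rvc)
    then show ?thesis using deq by blast
  qed
  have ind: "P.indep_vars (\<lambda>_. borel) X I"
    unfolding X_def
    by (rule P.indep_vars_compose2[OF ind0, where Y="\<lambda>b x. 0 + (b \<bullet> u) * x"]) (subst measurable_cong_sets[OF sets_G refl], simp)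
  have sumd: "distributed PB lborel (\<lambda>f. \<Sum>b\<in>I. X b f) (normal_density (\<Sum>b\<in>I. 0) (sqrt (\<Sum>b\<in>I. (\<bar>b \<bullet> u\<bar> * \<sigma>)\<^sup>2)))"
    by (rule P.sum_indep_normal[OF finI Ine ind]) (use Xd s in \<open>auto simp: I_def\<close>)
  have "(\<Sum>b\<in>I. (\<bar>b \<bullet> u\<bar> * \<sigma>)\<^sup>2) = \<sigma>\<^sup>2 * (\<Sum>b\<in>I. (b \<bullet> u)\<^sup>2)"
    by (simp add: power_mult_distrib sum_distrib_left mult.commute)
  also have "(\<Sum>b\<in>I. (b \<bullet> u)\<^sup>2) = (\<Sum>b\<in>(Basis::'a set). (b \<bullet> u)\<^sup>2)"
    by (rule sum.mono_neutral_left) (auto simp: I_def)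
  also have "\<dots> = u \<bullet> u" by (simp add: euclidean_inner[of u u] power2_eq_square inner_commute)
  also have "\<dots> = 1" using u by (simp add: power2_norm_eq_inner[symmetric])
  finally have sq: "sqrt (\<Sum>b\<in>I. (\<bar>b \<bullet> u\<bar> * \<sigma>)\<^sup>2) = \<sigma>" using s by simp
  have Teq: "(\<Sum>b\<in>Basis. f b *\<^sub>R b :: 'a) \<bullet> u = (\<Sum>b\<in>I. X b f)" for f
  proof -
    have "(\<Sum>b\<in>Basis. f b *\<^sub>R b :: 'a) \<bullet> u = (\<Sum>b\<in>(Basis::'a set). X b f)"
      by (simp add: inner_sum_left X_def mult.commute)
    also have "\<dots> = (\<Sum>b\<in>I. X b f)"
      by (rule sum.mono_neutral_right) (auto simp: I_def X_def)
    finally show ?thesis .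
  qed
  have sPB: "sets PB = sets (\<Pi>\<^sub>M b\<in>(Basis::'a set). (borel::real measure))"
    unfolding PB_def by (intro sets_PiM_cong) (auto simp: sets_G)
  have Tm: "(\<lambda>f. \<Sum>b\<in>Basis. f b *\<^sub>R b :: 'a) \<in> measurable PB borel"
    by (subst measurable_cong_sets[OF sPB refl]) measurable
  have "slice (gaussian_noise s2 :: 'a measure) u = distr (distr PB borel (\<lambda>f. \<Sum>b\<in>Basis. f b *\<^sub>R b :: 'a)) borel (\<lambda>a. a \<bullet> u)"
    unfolding slice_def gaussian_noise_prod[OF s2] PB_def G_def \<sigma>_def ..
  also have "\<dots> = distr PB borel (\<lambda>f. (\<Sum>b\<in>Basis. f b *\<^sub>R b :: 'a) \<bullet> u)"
    by (subst distr_distr) (use Tm in \<open>auto simp: comp_def\<close>)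
  also have "\<dots> = distr PB lborel (\<lambda>f. \<Sum>b\<in>I. X b f)"
    by (rule distr_cong) (auto simp: Teq)
  also have "\<dots> = density lborel (normal_density 0 \<sigma>)"
    using sumd sq unfolding distributed_def by simp
  finally show ?thesis unfolding \<sigma>_def .
qed

lemma inf_bound_sq:
  fixes S :: "ennreal set" and r K :: ennreal
  assumes K: "K \<noteq> \<infinity>" "K > 0" and b: "\<And>c. c \<in> S \<Longrightarrow> r \<le> K * c\<^sup>2"
  shows "r \<le> K * (Inf S)\<^sup>2"
proof (cases "S = {}")
  case True
  then show ?thesis using K by (simp add: top_power_ennreal ennreal_mult_top)
next
  case False
  define f where "f = (\<lambda>x::ennreal. K * (x * x))"
  have mono: "mono f" unfolding f_def by (intro monoI mult_left_mono mult_mono) auto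
  have lim: "((\<lambda>x. K * (x * x)) \<longlongrightarrow> K * (l * l)) (at_right l)" for l :: ennreal
  proof -
    have "((\<lambda>x. x * x) \<longlongrightarrow> l * l) (at_right l)"
      by (intro tendsto_mult_ennreal tendsto_ident_at) auto
    then show ?thesis
      by (intro tendsto_mult_ennreal tendsto_const) (use K in auto)
  qed
  have cont: "continuous (at_right (Inf S)) f"
    unfolding f_def continuous_within using lim .
  have "f (Inf S) = (INF s\<in>S. f s)"
    by (rule continuous_at_Inf_mono[OF mono cont False]) simp
  moreover have "r \<le> (INF s\<in>S. f s)"
    using b by (intro INF_greatest) (simp add: f_def power2_eq_square)
  ultimately show ?thesis by (simp add: f_def power2_eq_square)
qed

lemma nn_integral_cmult_le:
  fixes c :: ennreal
  assumes c: "c \<noteq> 0" "c \<noteq> \<infinity>"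
  shows "(\<integral>\<^sup>+ x. c * f x \<partial>M) \<le> c * integral\<^sup>N M f"
  unfolding nn_integral_def
proof (rule SUP_least)
  fix g assume "g \<in> {g. simple_function M g \<and> g \<le> (\<lambda>x. c * f x)}"
  then have g: "simple_function M g" "\<And>x. g x \<le> c * f x" by (auto simp: le_fun_def)
  define h where "h = (\<lambda>x. g x / c)"
  have hs: "simple_function M h" unfolding h_def by (rule simple_function_compose1[OF g(1)])
  have gh: "g x = c * h x" for x
    unfolding h_def using c by (simp add: ennreal_times_divide mult.commute[of c] mult_divide_eq_ennreal)
  have hf: "h \<le> f"
  proof (rule le_funI)
    fix x have "c * h x \<le> c * f x" using g(2)[of x] by (simp add: gh)
    then show "h x \<le> f x" using c by (simp add: ennreal_mult_le_mult_iff)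
  qed
  have "integral\<^sup>S M g = c * integral\<^sup>S M h"
    using hs by (simp add: gh[abs_def])
  also have "\<dots> \<le> c * (SUP g \<in> {g. simple_function M g \<and> g \<le> f}. integral\<^sup>S M g)"
    using hs hf by (intro mult_left_mono SUP_upper) auto
  finally show "integral\<^sup>S M g \<le> c * (SUP g \<in> {g. simple_function M g \<and> g \<le> f}. integral\<^sup>S M g)" .
qed

lemma renyi_self:
  fixes P :: "real measure"
  assumes P: "prob_space P" and a: "\<alpha> > 1"
  shows "renyi_div \<alpha> P P = 0"
proof -
  interpret prob_space P by fact
  have ac: "absolutely_continuous P P" by (simp add: absolutely_continuous_def)
  have "AE x in P. (\<lambda>_. 1::ennreal) x = RN_deriv P P x"
    by (rule RN_deriv_unique) (auto simp: density_1)
  then have "(\<integral>\<^sup>+ x. ennreal ((enn2real (RN_deriv P P x)) powr \<alpha>) \<partial>P) = (\<integral>\<^sup>+ x. 1 \<partial>P)"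
    by (intro nn_integral_cong_AE) (auto elim!: eventually_mono dest: sym)
  also have "\<dots> = 1" by (simp add: emeasure_space_1)
  finally show ?thesis unfolding renyi_div_def using ac by (simp add: Let_def)
qed

lemma W_bound:
  fixes \<mu>1 \<mu>2 :: "real measure" and \<sigma> \<alpha> :: real
  assumes s: "\<sigma> > 0" and a: "\<alpha> > 1"
  shows "renyi_div \<alpha> (\<mu>1 \<bind> gshift \<sigma>) (\<mu>2 \<bind> gshift \<sigma>) \<le> ennreal (\<alpha> / (2 * \<sigma>\<^sup>2)) * (W_inf \<mu>1 \<mu>2)\<^sup>2"
  unfolding W_inf_def
proof (rule inf_bound_sq)
  show "ennreal (\<alpha> / (2 * \<sigma>\<^sup>2)) \<noteq> \<infinity>" by simp
  show "ennreal (\<alpha> / (2 * \<sigma>\<^sup>2)) > 0" using s a by simp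
  fix c assume "c \<in> (\<lambda>\<pi>. SUP z\<in>msupport \<pi>. ennreal \<bar>fst z - snd z\<bar>) ` couplings \<mu>1 \<mu>2"
  then obtain \<pi> where pi: "\<pi> \<in> couplings \<mu>1 \<mu>2" and ceq: "c = (SUP z\<in>msupport \<pi>. ennreal \<bar>fst z - snd z\<bar>)"
    by auto
  have P: "prob_space \<pi>" and sets: "sets \<pi> = sets borel" and m1: "distr \<pi> borel fst = \<mu>1"
    and m2: "distr \<pi> borel snd = \<mu>2" using pi by (auto simp: couplings_def)
  show "renyi_div \<alpha> (\<mu>1 \<bind> gshift \<sigma>) (\<mu>2 \<bind> gshift \<sigma>) \<le> ennreal (\<alpha> / (2 * \<sigma>\<^sup>2)) * c\<^sup>2"
  proof (cases "c = \<infinity>")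
    case True then show ?thesis using s a by (simp add: top_power_ennreal ennreal_mult_top)
  next
    case False
    then obtain c' where c': "c = ennreal c'" "c' \<ge> 0" by (cases c) auto
    have ae: "AE p in \<pi>. \<bar>fst p - snd p\<bar> \<le> c'"
      by (rule support_AE[OF sets c'(2)]) (simp add: ceq[symmetric] c'(1))
    interpret prob_space \<pi> by fact
    have fstm: "fst \<in> borel_measurable \<pi>" and sndm: "snd \<in> borel_measurable \<pi>"
      by (auto simp: measurable_cong_sets[OF sets refl]
          intro!: borel_measurable_continuous_onI continuous_intros)
    have gm: "gshift \<sigma> \<in> borel \<rightarrow>\<^sub>M subprob_algebra borel"
      using gshift_measurable[OF s, of "\<lambda>x. x" borel] by simp
    have e1: "\<mu>1 \<bind> gshift \<sigma> = \<pi> \<bind> (\<lambda>p. gshift \<sigma> (fst p))"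
      unfolding m1[symmetric] by (rule bind_distr[OF fstm gm not_empty])
    have e2: "\<mu>2 \<bind> gshift \<sigma> = \<pi> \<bind> (\<lambda>p. gshift \<sigma> (snd p))"
      unfolding m2[symmetric] by (rule bind_distr[OF sndm gm not_empty])
    have "renyi_div \<alpha> (\<mu>1 \<bind> gshift \<sigma>) (\<mu>2 \<bind> gshift \<sigma>) \<le> ennreal (\<alpha> * c'\<^sup>2 / (2 * \<sigma>\<^sup>2))"
      unfolding e1 e2 by (rule renyi_mixture[OF s a P sets c'(2) ae])
    also have "\<dots> = ennreal (\<alpha> / (2 * \<sigma>\<^sup>2)) * c\<^sup>2"
      using c' s a by (simp add: ennreal_power ennreal_mult[symmetric])
    finally show ?thesis .
  qed
qed

lemma gaussian_noise_prob:
  assumes "s2 \<ge> 0"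
  shows "prob_space (gaussian_noise s2 :: 'a::euclidean_space measure)"
    and "sets (gaussian_noise s2 :: 'a measure) = sets borel"
proof -
  have "prob_space (gaussian_noise s2 :: 'a measure) \<and> sets (gaussian_noise s2 :: 'a measure) = sets borel"
  proof (cases "s2 = 0")
    case True then show ?thesis by (simp add: gaussian_noise_def prob_space_return)
  next
    case False
    then have s2: "s2 > 0" using assms by simp
    have s: "sqrt s2 > 0" using s2 by simp
    interpret FP: finite_product_prob_space "\<lambda>_::'a. density lborel (normal_density 0 (sqrt s2))" "Basis::'a set"
      by (intro finite_product_prob_space.intro finite_product_sigma_finite.intro product_prob_spaceI
          finite_product_sigma_finite_axioms.intro product_sigma_finite.intro)
         (auto intro: prob_space_imp_sigma_finite prob_space_normal_density s)
    have sPB: "sets (\<Pi>\<^sub>M b\<in>(Basis::'a set). density lborel (normal_density 0 (sqrt s2)))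
        = sets (\<Pi>\<^sub>M b\<in>(Basis::'a set). (borel::real measure))"
      by (intro sets_PiM_cong) auto
    have Tm: "(\<lambda>f. \<Sum>b\<in>Basis. f b *\<^sub>R b :: 'a) \<in> measurable (\<Pi>\<^sub>M b\<in>(Basis::'a set). density lborel (normal_density 0 (sqrt s2))) borel"
      by (subst measurable_cong_sets[OF sPB refl]) measurable
    show ?thesis unfolding gaussian_noise_prod[OF s2]
      by (auto intro!: FP.prob_space_distr Tm)
  qed
  then show "prob_space (gaussian_noise s2 :: 'a measure)" "sets (gaussian_noise s2 :: 'a measure) = sets borel"
    by auto
qed

lemma noise_kernel_measurable:
  assumes "s2 \<ge> 0" and g: "g \<in> M \<rightarrow>\<^sub>M borel"
  shows "(\<lambda>p. distr (gaussian_noise s2 :: 'a::euclidean_space measure) borel (\<lambda>n. g p + n)) \<in> M \<rightarrow>\<^sub>M subprob_algebra borel"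
proof -
  have N: "(gaussian_noise s2 :: 'a measure) \<in> space (subprob_algebra borel)"
    using prob_space_imp_subprob_space[OF gaussian_noise_prob(1)[OF assms(1), where 'a='a]]
      gaussian_noise_prob(2)[OF assms(1), where 'a='a] by (auto simp: space_subprob_algebra)
  show ?thesis
    by (rule measurable_distr2[where M=borel]) (use g N in \<open>auto intro!: measurable_const\<close>)
qed

lemma mech_slice_gen:
  fixes g :: "'b \<Rightarrow> 'a::euclidean_space"
  assumes C: "prob_space C" and g: "g \<in> C \<rightarrow>\<^sub>M borel" and s2: "s2 > 0" and u: "norm u = 1"
  shows "slice (C \<bind> (\<lambda>p. distr (gaussian_noise s2 :: 'a measure) borel (\<lambda>n. g p + n))) u
       = slice (distr C borel g) u \<bind> gshift (sqrt s2)"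
proof -
  interpret prob_space C by fact
  let ?N = "gaussian_noise s2 :: 'a measure"
  have sN: "sets ?N = sets borel" using gaussian_noise_prob(2)[of s2, where 'a='a] s2 by simp
  have km: "(\<lambda>p. distr ?N borel (\<lambda>n. g p + n)) \<in> C \<rightarrow>\<^sub>M subprob_algebra borel"
    using noise_kernel_measurable[OF _ g] s2 by simp
  have gum: "(\<lambda>p. g p \<bullet> u) \<in> C \<rightarrow>\<^sub>M borel" using g by measurable
  have gm: "gshift (sqrt s2) \<in> borel \<rightarrow>\<^sub>M subprob_algebra borel"
    using gshift_measurable[of "sqrt s2" "\<lambda>x. x" borel] s2 by simp
  have inner: "distr (distr ?N borel (\<lambda>n. c + n)) borel (\<lambda>a. a \<bullet> u) = gshift (sqrt s2) (c \<bullet> u)" for c :: 'a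
  proof -
    have "distr (distr ?N borel (\<lambda>n. c + n)) borel (\<lambda>a. a \<bullet> u) = distr ?N borel (\<lambda>n. c \<bullet> u + n \<bullet> u)"
      by (subst distr_distr) (auto simp: measurable_cong_sets[OF sN refl] comp_def inner_add_left)
    also have "\<dots> = distr (distr ?N borel (\<lambda>n. n \<bullet> u)) borel (\<lambda>t. c \<bullet> u + t)"
      by (subst distr_distr) (auto simp: measurable_cong_sets[OF sN refl] comp_def)
    also have "distr ?N borel (\<lambda>n. n \<bullet> u) = density lborel (normal_density 0 (sqrt s2))"
      using gaussian_noise_slice[OF s2 u] by (simp add: slice_def)
    finally show ?thesis by (simp add: gshift_def)
  qed
  have "slice (C \<bind> (\<lambda>p. distr ?N borel (\<lambda>n. g p + n))) u
      = C \<bind> (\<lambda>p. distr (distr ?N borel (\<lambda>n. g p + n)) borel (\<lambda>a. a \<bullet> u))"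
    unfolding slice_def by (rule distr_bind[OF km not_empty]) simp
  also have "\<dots> = C \<bind> (\<lambda>p. gshift (sqrt s2) (g p \<bullet> u))"
    by (simp add: inner)
  also have "\<dots> = distr C borel (\<lambda>p. g p \<bullet> u) \<bind> gshift (sqrt s2)"
    by (rule bind_distr[OF gum gm not_empty, symmetric])
  also have "distr C borel (\<lambda>p. g p \<bullet> u) = slice (distr C borel g) u"
    unfolding slice_def by (subst distr_distr) (use g in \<open>auto simp: comp_def\<close>)
  finally show ?thesis .
qed

lemma mech_zero:
  fixes g :: "'b \<Rightarrow> 'a::euclidean_space"
  assumes C: "prob_space C" and g: "g \<in> C \<rightarrow>\<^sub>M borel"
  shows "C \<bind> (\<lambda>p. distr (gaussian_noise 0 :: 'a measure) borel (\<lambda>n. g p + n)) = distr C borel g"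
proof -
  interpret prob_space C by fact
  have "C \<bind> (\<lambda>p. distr (gaussian_noise 0 :: 'a measure) borel (\<lambda>n. g p + n)) = C \<bind> (\<lambda>p. return borel (g p))"
    by (simp add: gaussian_noise_def distr_return)
  also have "\<dots> = distr C borel g" by (rule bind_return_distr'[OF not_empty g])
  finally show ?thesis .
qed

definition RQ :: "(real \<times> real) set" where
  "RQ = {(t, q). t \<in> \<rat> \<and> q \<in> \<rat> \<and> q > 0}"

lemma countable_RQ: "countable RQ"
proof -
  have "RQ \<subseteq> \<rat> \<times> \<rat>" by (auto simp: RQ_def)
  moreover have "countable (\<rat> \<times> \<rat> :: (real \<times> real) set)"
    using countable_rat by (intro countable_SIGMA) auto
  ultimately show ?thesis by (rule countable_subset)
qed

definition vv :: "real measure \<Rightarrow> real measure \<Rightarrow> ennreal" where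
  "vv \<mu>1 \<mu>2 = (SUP p\<in>RQ. (if measure \<mu>1 {..fst p} > measure \<mu>2 {..fst p + snd p}
                            \<or> measure \<mu>2 {..fst p} > measure \<mu>1 {..fst p + snd p}
                          then ennreal (snd p) else 0))"

lemma rat_witness:
  fixes F G :: "real \<Rightarrow> real"
  assumes Fm: "mono F" and Gm: "mono G" and Gc: "continuous (at_right t) G" and lt: "G t < F t"
  shows "\<exists>t' q'. (t', q') \<in> RQ \<and> G (t' + q') < F t'"
proof -
  have "(G \<longlongrightarrow> G t) (at_right t)" using Gc by (simp add: continuous_within)
  then have "eventually (\<lambda>x. G x < F t) (at_right t)" using lt by (rule order_tendstoD)
  then obtain b where b: "b > t" "\<And>y. t < y \<Longrightarrow> y < b \<Longrightarrow> G y < F t"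
    by (auto simp: eventually_at_right_field)
  define y0 where "y0 = (t + b) / 2"
  have y0: "t < y0" "y0 < b" using b by (auto simp: y0_def)
  obtain t' where t': "t' \<in> \<rat>" "t < t'" "t' < t + (y0 - t) / 2"
    using Rats_dense_in_real[of t "t + (y0 - t) / 2"] y0 by auto
  obtain q' where q': "q' \<in> \<rat>" "0 < q'" "q' < (y0 - t) / 2"
    using Rats_dense_in_real[of 0 "(y0 - t) / 2"] y0 by auto
  have tq: "t' + q' \<le> y0"
  proof -
    have "t' + q' < t + (y0 - t) / 2 + (y0 - t) / 2" using t'(3) q'(3) by (rule add_strict_mono)
    then show ?thesis by simp
  qed
  have "G (t' + q') \<le> G y0" using tq by (rule monoD[OF Gm])
  also have "\<dots> < F t" using b(2) y0 by auto
  also have "\<dots> \<le> F t'" using t' by (intro monoD[OF Fm]) auto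
  finally show ?thesis using t' q' by (auto simp: RQ_def)
qed

lemma vv_zero:
  assumes P1: "prob_space \<mu>1" "sets \<mu>1 = sets borel" and P2: "prob_space \<mu>2" "sets \<mu>2 = sets borel"
    and z: "vv \<mu>1 \<mu>2 = 0"
  shows "\<mu>1 = \<mu>2"
proof (rule ccontr)
  assume ne: "\<mu>1 \<noteq> \<mu>2"
  interpret R1: real_distribution \<mu>1 using P1 by (simp add: real_distribution_def real_distribution_axioms_def)
  interpret R2: real_distribution \<mu>2 using P2 by (simp add: real_distribution_def real_distribution_axioms_def)
  have "cdf \<mu>1 \<noteq> cdf \<mu>2"
    using ne cdf_unique[OF R1.real_distribution_axioms R2.real_distribution_axioms] by auto
  then obtain t where t: "cdf \<mu>1 t \<noteq> cdf \<mu>2 t" by auto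
  have m1: "mono (cdf \<mu>1)" and m2: "mono (cdf \<mu>2)"
    by (auto intro!: monoI R1.cdf_nondecreasing R2.cdf_nondecreasing)
  have "\<exists>p\<in>RQ. (measure \<mu>1 {..fst p} > measure \<mu>2 {..fst p + snd p}
                  \<or> measure \<mu>2 {..fst p} > measure \<mu>1 {..fst p + snd p})"
  proof (cases "cdf \<mu>2 t < cdf \<mu>1 t")
    case True
    from rat_witness[OF m1 m2 R2.cdf_is_right_cont True] obtain t' q' where
      "(t', q') \<in> RQ" "cdf \<mu>2 (t' + q') < cdf \<mu>1 t'" by blast
    then show ?thesis by (intro bexI[of _ "(t', q')"]) (auto simp: cdf_def)
  next
    case False
    then have "cdf \<mu>1 t < cdf \<mu>2 t" using t by linarith
    from rat_witness[OF m2 m1 R1.cdf_is_right_cont this] obtain t' q' where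
      "(t', q') \<in> RQ" "cdf \<mu>1 (t' + q') < cdf \<mu>2 t'" by blast
    then show ?thesis by (intro bexI[of _ "(t', q')"]) (auto simp: cdf_def)
  qed
  then obtain p where p: "p \<in> RQ" and c: "measure \<mu>1 {..fst p} > measure \<mu>2 {..fst p + snd p}
                  \<or> measure \<mu>2 {..fst p} > measure \<mu>1 {..fst p + snd p}" by blast
  have "ennreal (snd p) \<le> vv \<mu>1 \<mu>2"
    unfolding vv_def using p c by (intro SUP_upper2[OF p]) auto
  moreover have "snd p > 0" using p by (auto simp: RQ_def)
  ultimately show False using z by simp
qed

lemma coupling_cdf:
  fixes \<pi> :: "(real \<times> real) measure"
  assumes P: "prob_space \<pi>" and sets: "sets \<pi> = sets borel"
    and ae: "AE p in \<pi>. \<bar>fst p - snd p\<bar> \<le> c" and cq: "c < q"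
  shows "measure (distr \<pi> borel fst) {..t} \<le> measure (distr \<pi> borel snd) {..t + q}"
proof -
  interpret prob_space \<pi> by fact
  have fstm: "fst \<in> borel_measurable \<pi>" and sndm: "snd \<in> borel_measurable \<pi>"
    by (auto simp: measurable_cong_sets[OF sets refl]
        intro!: borel_measurable_continuous_onI continuous_intros)
  have A: "fst -` {..t} \<inter> space \<pi> \<in> sets \<pi>" using fstm by measurable
  have B: "snd -` {..t + q} \<inter> space \<pi> \<in> sets \<pi>" using sndm by measurable
  have "measure \<pi> (fst -` {..t} \<inter> space \<pi>) \<le> measure \<pi> (snd -` {..t + q} \<inter> space \<pi>)"
    by (rule finite_measure_mono_AE[OF _ B]) (rule eventually_mono[OF ae], use cq in auto)
  then show ?thesis using fstm sndm by (simp add: measure_distr)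
qed

lemma coupling_cdf2:
  fixes \<pi> :: "(real \<times> real) measure"
  assumes P: "prob_space \<pi>" and sets: "sets \<pi> = sets borel"
    and ae: "AE p in \<pi>. \<bar>fst p - snd p\<bar> \<le> c" and cq: "c < q"
  shows "measure (distr \<pi> borel snd) {..t} \<le> measure (distr \<pi> borel fst) {..t + q}"
proof -
  interpret prob_space \<pi> by fact
  have fstm: "fst \<in> borel_measurable \<pi>" and sndm: "snd \<in> borel_measurable \<pi>"
    by (auto simp: measurable_cong_sets[OF sets refl]
        intro!: borel_measurable_continuous_onI continuous_intros)
  have B: "fst -` {..t + q} \<inter> space \<pi> \<in> sets \<pi>" using fstm by measurable
  have "measure \<pi> (snd -` {..t} \<inter> space \<pi>) \<le> measure \<pi> (fst -` {..t + q} \<inter> space \<pi>)"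
    by (rule finite_measure_mono_AE[OF _ B]) (rule eventually_mono[OF ae], use cq in auto)
  then show ?thesis using fstm sndm by (simp add: measure_distr)
qed

lemma vv_le_W:
  shows "vv \<mu>1 \<mu>2 \<le> W_inf \<mu>1 \<mu>2"
  unfolding vv_def
proof (rule SUP_least)
  fix p assume p: "p \<in> RQ"
  show "(if measure \<mu>1 {..fst p} > measure \<mu>2 {..fst p + snd p}
           \<or> measure \<mu>2 {..fst p} > measure \<mu>1 {..fst p + snd p}
         then ennreal (snd p) else 0) \<le> W_inf \<mu>1 \<mu>2"
  proof (cases "measure \<mu>1 {..fst p} > measure \<mu>2 {..fst p + snd p}
           \<or> measure \<mu>2 {..fst p} > measure \<mu>1 {..fst p + snd p}")
    case False then show ?thesis by simp
  next
    case True
    have "ennreal (snd p) \<le> W_inf \<mu>1 \<mu>2"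
      unfolding W_inf_def
    proof (rule INF_greatest)
      fix \<pi> assume pi: "\<pi> \<in> couplings \<mu>1 \<mu>2"
      have P: "prob_space \<pi>" and sets: "sets \<pi> = sets borel" and m1: "distr \<pi> borel fst = \<mu>1"
        and m2: "distr \<pi> borel snd = \<mu>2" using pi by (auto simp: couplings_def)
      show "ennreal (snd p) \<le> (SUP z\<in>msupport \<pi>. ennreal \<bar>fst z - snd z\<bar>)"
      proof (cases "(SUP z\<in>msupport \<pi>. ennreal \<bar>fst z - snd z\<bar>) = \<infinity>")
        case True then show ?thesis unfolding True by simp
      next
        case False
        then obtain c where c: "(SUP z\<in>msupport \<pi>. ennreal \<bar>fst z - snd z\<bar>) = ennreal c" "c \<ge> 0"
          by (cases "(SUP z\<in>msupport \<pi>. ennreal \<bar>fst z - snd z\<bar>)") auto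
        have ae: "AE p in \<pi>. \<bar>fst p - snd p\<bar> \<le> c"
          by (rule support_AE[OF sets c(2)]) (simp add: c(1))
        have "snd p \<le> c"
        proof (rule ccontr)
          assume "\<not> snd p \<le> c"
          then have cq: "c < snd p" by simp
          have 1: "measure \<mu>1 {..fst p} \<le> measure \<mu>2 {..fst p + snd p}"
            using coupling_cdf[OF P sets ae cq, of "fst p"] m1 m2 by simp
          have 2: "measure \<mu>2 {..fst p} \<le> measure \<mu>1 {..fst p + snd p}"
            using coupling_cdf2[OF P sets ae cq, of "fst p"] m1 m2 by simp
          show False using True 1 2 by linarith
        qed
        then show ?thesis using c by (simp add: ennreal_leI)
      qed
    qed
    then show ?thesis using True by simp
  qed
qed

lemma slice_cdf_meas:
  fixes Q :: "'a::euclidean_space measure"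
  assumes P: "prob_space Q" and sQ: "sets Q = sets borel"
  shows "(\<lambda>u. measure (slice Q u) {..t}) \<in> borel_measurable borel"
proof -
  interpret prob_space Q by fact
  define S where "S = {p::'a \<times> 'a. snd p \<bullet> fst p \<le> t}"
  note sQ[measurable_cong]
  have spp: "space (borel \<Otimes>\<^sub>M Q) = UNIV"
    using sets_eq_imp_space_eq[OF sQ] by (simp add: space_pair_measure)
  have "{p \<in> space (borel \<Otimes>\<^sub>M Q). snd p \<bullet> fst p \<le> t} \<in> sets (borel \<Otimes>\<^sub>M Q)"
    by measurable
  then have S: "S \<in> sets (borel \<Otimes>\<^sub>M Q)" by (simp add: S_def spp)
  have sp: "space Q = UNIV" using sets_eq_imp_space_eq[OF sQ] by simp
  have eq: "measure (slice Q u) {..t} = enn2real (emeasure Q (Pair u -` S))" for u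
  proof -
    have "measure (slice Q u) {..t} = measure Q ((\<lambda>a. a \<bullet> u) -` {..t} \<inter> space Q)"
      unfolding slice_def by (rule measure_distr) (auto simp: measurable_cong_sets[OF sQ refl])
    also have "(\<lambda>a. a \<bullet> u) -` {..t} \<inter> space Q = Pair u -` S" by (auto simp: S_def sp)
    finally show ?thesis by (simp add: measure_def)
  qed
  show ?thesis unfolding eq
    by (intro borel_measurable_enn2real measurable_emeasure_Pair S)
qed

lemma vv_meas:
  fixes Q1 Q2 :: "'a::euclidean_space measure"
  assumes "prob_space Q1" "sets Q1 = sets borel" "prob_space Q2" "sets Q2 = sets borel"
  shows "(\<lambda>u. vv (slice Q1 u) (slice Q2 u)) \<in> borel_measurable borel"
proof -
  have [measurable]: "(\<lambda>u. measure (slice Q1 u) {..t}) \<in> borel_measurable borel" for t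
    using slice_cdf_meas assms by blast
  have [measurable]: "(\<lambda>u. measure (slice Q2 u) {..t}) \<in> borel_measurable borel" for t
    using slice_cdf_meas assms by blast
  show ?thesis unfolding vv_def
    by (rule borel_measurable_SUP[OF countable_RQ]) measurable
qed

lemma cond_secret_prob:
  assumes P: "prob_space \<theta>" and pos: "prior_secret \<theta> s > 0"
  shows "prob_space (cond_secret \<theta> s)" "sets (cond_secret \<theta> s) = sets \<theta>"
proof -
  interpret prob_space \<theta> by fact
  define E where "E = secret_event \<theta> s"
  have mpos: "measure \<theta> E > 0" using pos by (simp add: prior_secret_def E_def)
  have E: "E \<in> sets \<theta>" using mpos measure_notin_sets[of E \<theta>] by auto
  have e0: "emeasure \<theta> E \<noteq> 0" using mpos by (simp add: emeasure_eq_measure)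
  have etop: "emeasure \<theta> E < top" by (simp add: emeasure_eq_measure)
  show "sets (cond_secret \<theta> s) = sets \<theta>" by (simp add: cond_secret_def)
  show "prob_space (cond_secret \<theta> s)"
  proof
    have "emeasure (cond_secret \<theta> s) (space (cond_secret \<theta> s))
        = (\<integral>\<^sup>+ p. indicator E p / emeasure \<theta> E \<partial>\<theta>)"
      unfolding cond_secret_def E_def[symmetric] using E
      by (subst emeasure_density) (auto intro!: nn_integral_cong split: split_indicator)
    also have "\<dots> = (\<integral>\<^sup>+ p. indicator E p \<partial>\<theta>) / emeasure \<theta> E"
      using E by (intro nn_integral_divide) auto
    also have "\<dots> = 1" using E e0 etop by simp
    finally show "emeasure (cond_secret \<theta> s) (space (cond_secret \<theta> s)) = 1" .
  qed
qed

theorem theorem1: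
  fixes S :: "'s set" and Q :: "('s \<times> 's) set" and \<Theta> :: "('s \<times> 'x) measure set"
    and Xsp :: "'x measure"
    and U :: "'a::euclidean_space set" and \<omega> :: "'a measure"
    and \<alpha> \<epsilon> :: real and f :: "'x \<Rightarrow> 'a"
  assumes "pufferfish_scenario S Q \<Theta> Xsp"
    and "slice_profile U \<omega>"
    and "\<alpha> > 1" and "\<epsilon> > 0"
    and "f \<in> Xsp \<rightarrow>\<^sub>M borel"
    and "(\<integral>\<^sup>+ u. (slice_sens Q \<Theta> f u)\<^sup>2 \<partial>\<omega>) < \<infinity>"
  shows "ave_srpp \<alpha> \<epsilon> \<omega> Q \<Theta>
           (gaussian_mech f (\<alpha> * enn2real (\<integral>\<^sup>+ u. (slice_sens Q \<Theta> f u)\<^sup>2 \<partial>\<omega>) / (2 * \<epsilon>)))"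
proof -
  note puf = assms(1) and sp = assms(2) and a = assms(3) and eps = assms(4) and fm = assms(5)
    and fin = assms(6)
  define \<Delta> where "\<Delta> = slice_sens Q \<Theta> f"
  define I where "I = (\<integral>\<^sup>+ u. (\<Delta> u)\<^sup>2 \<partial>\<omega>)"
  define D where "D = enn2real I"
  define s2 where "s2 = \<alpha> * D / (2 * \<epsilon>)"
  have ID: "I = ennreal D" using fin by (simp add: I_def D_def \<Delta>_def ennreal_enn2real less_top)
  have D0: "D \<ge> 0" by (simp add: D_def)
  have s20: "s2 \<ge> 0" using a eps D0 by (simp add: s2_def)
  have Usp: "U \<subseteq> sphere 0 1" and Pw: "prob_space \<omega>" and sw: "sets \<omega> = sets borel"
    and wU: "emeasure \<omega> U = 1" using sp by (auto simp: slice_profile_def)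
  have aeU: "AE u in \<omega>. u \<in> U"
    using Pw wU by (intro prob_space.AE_prob_1) (auto simp: measure_def)
  have Th: "\<And>\<theta>. \<theta> \<in> \<Theta> \<Longrightarrow> prob_space \<theta> \<and> sets \<theta> = sets (count_space UNIV \<Otimes>\<^sub>M Xsp)"
    using puf by (auto simp: pufferfish_scenario_def)
  show ?thesis
    unfolding ave_srpp_def s2_def[symmetric] \<Delta>_def[symmetric] I_def[symmetric] D_def[symmetric]
  proof (intro ballI impI, clarify)
    fix \<theta> si sj assume th: "\<theta> \<in> \<Theta>" and q: "(si, sj) \<in> Q"
      and p1: "prior_secret \<theta> si > 0" and p2: "prior_secret \<theta> sj > 0"
    define C1 where "C1 = cond_secret \<theta> si"
    define C2 where "C2 = cond_secret \<theta> sj"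
    have Pth: "prob_space \<theta>" and sth: "sets \<theta> = sets (count_space UNIV \<Otimes>\<^sub>M Xsp)" using Th[OF th] by auto
    have PC1: "prob_space C1" and sC1: "sets C1 = sets \<theta>"
      using cond_secret_prob[OF Pth p1] by (auto simp: C1_def)
    have PC2: "prob_space C2" and sC2: "sets C2 = sets \<theta>"
      using cond_secret_prob[OF Pth p2] by (auto simp: C2_def)
    define g where "g = (\<lambda>p::'s \<times> 'x. f (snd p))"
    have gm: "g \<in> (count_space UNIV \<Otimes>\<^sub>M Xsp) \<rightarrow>\<^sub>M borel" unfolding g_def using fm by measurable
    have g1: "g \<in> C1 \<rightarrow>\<^sub>M borel"
    proof -
      have e: "sets C1 = sets (count_space UNIV \<Otimes>\<^sub>M Xsp)" using sC1 sth by simp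
      show ?thesis by (subst measurable_cong_sets[OF e refl]) (rule gm)
    qed
    have g2: "g \<in> C2 \<rightarrow>\<^sub>M borel"
    proof -
      have e: "sets C2 = sets (count_space UNIV \<Otimes>\<^sub>M Xsp)" using sC2 sth by simp
      show ?thesis by (subst measurable_cong_sets[OF e refl]) (rule gm)
    qed
    have mech1: "mech_law \<theta> (gaussian_mech f s2) si = C1 \<bind> (\<lambda>p. distr (gaussian_noise s2) borel (\<lambda>n. g p + n))"
      by (simp add: mech_law_def gaussian_mech_def C1_def g_def)
    have mech2: "mech_law \<theta> (gaussian_mech f s2) sj = C2 \<bind> (\<lambda>p. distr (gaussian_noise s2) borel (\<lambda>n. g p + n))"
      by (simp add: mech_law_def gaussian_mech_def C2_def g_def)
    have ql1: "query_law \<theta> f si = distr C1 borel g" by (simp add: query_law_def C1_def g_def)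
    have ql2: "query_law \<theta> f sj = distr C2 borel g" by (simp add: query_law_def C2_def g_def)
    have Wle: "W_inf (slice (distr C1 borel g) u) (slice (distr C2 borel g) u) \<le> \<Delta> u" for u
      unfolding \<Delta>_def slice_sens_def ql1[symmetric] ql2[symmetric]
      by (rule SUP_upper2[where i="(\<theta>, si, sj)"]) (use th q p1 p2 in simp_all)
    have QL1: "prob_space (distr C1 borel g)" "sets (distr C1 borel g) = sets borel"
      using prob_space.prob_space_distr[OF PC1 g1] by auto
    have QL2: "prob_space (distr C2 borel g)" "sets (distr C2 borel g) = sets borel"
      using prob_space.prob_space_distr[OF PC2 g2] by auto
    have Psl: "prob_space (slice M u)" "sets (slice M u) = sets borel"
      if "prob_space M" "sets M = sets (borel::'a measure)" for M u
    proof -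
      have "(\<lambda>a::'a. a \<bullet> u) \<in> M \<rightarrow>\<^sub>M borel" by (subst measurable_cong_sets[OF that(2) refl]) simp
      then show "prob_space (slice M u)" "sets (slice M u) = sets borel"
        unfolding slice_def using prob_space.prob_space_distr[OF that(1)] by auto
    qed
    show "AveSD \<omega> \<alpha> (mech_law \<theta> (gaussian_mech f s2) si) (mech_law \<theta> (gaussian_mech f s2) sj) \<le> ennreal \<epsilon>"
    proof (cases "D = 0")
      case False
      then have Dp: "D > 0" using D0 by simp
      have s2p: "s2 > 0" using a eps Dp by (simp add: s2_def)
      define K where "K = ennreal (\<alpha> / (2 * s2))"
      have bound: "renyi_div \<alpha> (slice (mech_law \<theta> (gaussian_mech f s2) si) u) (slice (mech_law \<theta> (gaussian_mech f s2) sj) u)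
          \<le> K * (\<Delta> u)\<^sup>2" if "u \<in> U" for u
      proof -
        have nu: "norm u = 1" using that Usp by auto
        have "renyi_div \<alpha> (slice (mech_law \<theta> (gaussian_mech f s2) si) u) (slice (mech_law \<theta> (gaussian_mech f s2) sj) u)
            = renyi_div \<alpha> (slice (distr C1 borel g) u \<bind> gshift (sqrt s2)) (slice (distr C2 borel g) u \<bind> gshift (sqrt s2))"
          unfolding mech1 mech2 mech_slice_gen[OF PC1 g1 s2p nu] mech_slice_gen[OF PC2 g2 s2p nu] ..
        also have "\<dots> \<le> ennreal (\<alpha> / (2 * (sqrt s2)\<^sup>2)) * (W_inf (slice (distr C1 borel g) u) (slice (distr C2 borel g) u))\<^sup>2"
          by (rule W_bound) (use s2p a in auto)
        also have "\<dots> \<le> K * (\<Delta> u)\<^sup>2"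
          unfolding K_def using s2p Wle[of u] by (auto intro!: mult_left_mono power_mono)
        finally show ?thesis .
      qed
      have "AveSD \<omega> \<alpha> (mech_law \<theta> (gaussian_mech f s2) si) (mech_law \<theta> (gaussian_mech f s2) sj)
          \<le> (\<integral>\<^sup>+ u. K * (\<Delta> u)\<^sup>2 \<partial>\<omega>)"
        unfolding AveSD_def by (rule nn_integral_mono_AE) (rule eventually_mono[OF aeU], rule bound)
      also have "\<dots> \<le> K * I" unfolding I_def K_def by (rule nn_integral_cmult_le) (use a s2p in auto)
      also have "K * I = ennreal \<epsilon>"
      proof -
        have "\<alpha> / (2 * s2) * D = \<epsilon>" using a eps Dp by (simp add: s2_def field_simps)
        then show ?thesis unfolding K_def ID using a s2p D0 by (simp add: ennreal_mult[symmetric])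
      qed
      finally show ?thesis .
    next
      case True
      then have s2z: "s2 = 0" by (simp add: s2_def)
      have m1: "mech_law \<theta> (gaussian_mech f s2) si = distr C1 borel g"
        using mech_zero[OF PC1 g1] mech1 s2z by simp
      have m2: "mech_law \<theta> (gaussian_mech f s2) sj = distr C2 borel g"
        using mech_zero[OF PC2 g2] mech2 s2z by simp
      define v where "v = (\<lambda>u. vv (slice (distr C1 borel g) u) (slice (distr C2 borel g) u))"
      have vm: "v \<in> borel_measurable \<omega>" unfolding v_def
        by (subst measurable_cong_sets[OF sw refl]) (rule vv_meas[OF QL1 QL2])
      have "(\<integral>\<^sup>+ u. (v u)\<^sup>2 \<partial>\<omega>) \<le> I" unfolding I_def
        by (intro nn_integral_mono power_mono) (auto simp: v_def intro: order_trans[OF vv_le_W Wle])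
      then have "(\<integral>\<^sup>+ u. (v u)\<^sup>2 \<partial>\<omega>) = 0" using ID True by simp
      then have "AE u in \<omega>. (v u)\<^sup>2 = 0" using vm by (subst (asm) nn_integral_0_iff_AE) auto
      then have ae: "AE u in \<omega>. slice (distr C1 borel g) u = slice (distr C2 borel g) u"
      proof (rule eventually_mono)
        fix u assume "(v u)\<^sup>2 = 0"
        then have "vv (slice (distr C1 borel g) u) (slice (distr C2 borel g) u) = 0" by (simp add: v_def)
        then show "slice (distr C1 borel g) u = slice (distr C2 borel g) u"
          by (rule vv_zero[OF Psl[OF QL1] Psl[OF QL2]])
      qed
      have "AveSD \<omega> \<alpha> (mech_law \<theta> (gaussian_mech f s2) si) (mech_law \<theta> (gaussian_mech f s2) sj) = (\<integral>\<^sup>+ u. 0 \<partial>\<omega>)"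
        unfolding AveSD_def m1 m2
      proof (rule nn_integral_cong_AE, rule eventually_mono[OF ae])
        fix u assume "slice (distr C1 borel g) u = slice (distr C2 borel g) u"
        then show "renyi_div \<alpha> (slice (distr C1 borel g) u) (slice (distr C2 borel g) u) = 0"
          using renyi_self[OF Psl(1)[OF QL2] a] by simp
      qed
      then show ?thesis by simp
    qed
  qed
qed

end
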